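(* Let $n\ge1$, $\lambda_1>2$, $0<\alpha\le n(\lambda_1-2)/2$, and let $r\in\mathbb{Z}_+$, $\gamma_n=\frac{\alpha}{2(n+\alpha)}$. Let $I\in\mathcal D_n$ be good, $k\ge1$ an integer, and $(x_1,t_1)\in W_I$. Then $$\Big[\int_{\mathbb{R}^n}\Big(\int_{(I^{(k-1)})^c}\frac{t_1^\alpha\,dz_1}{(t_1+|x_1-y_1-z_1|)^{n+\alpha}}\Big)^2\Big(\frac{t_1}{t_1+|y_1|}\Big)^{n\lambda_1}\frac{dy_1}{t_1^n}\Big]^{1/2}\lesssim 2^{-\alpha k/2},$$ with implied constant depending only on $n,\alpha,\lambda_1,r$.
   Context: $\ell^\infty$ norm on $\mathbb{R}^n$. $\mathcal D_n$ is a dyadic grid in $\mathbb{R}^n$; $W_I=I\times(\ell(I)/2,\ell(I))$; $I^{(k)}$ denotes the unique cube of $\mathcal D_n$ with $\ell(I^{(k)})=2^k\ell(I)$ containing $I$ (so $I^{(0)}=I$). A cube $I\in\mathcal D_n$ is bad if there is $J\in\mathcal D_n$ with $\ell(J)\ge2^r\ell(I)$ and $\operatorname{dist}(I,\partial J)\le\ell(I)^{\gamma_n}\ell(J)^{1-\gamma_n}$; otherwise it is good. *)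

theory Defs
  imports "HOL-Analysis.Analysis"
begin

definition supn :: "real^'n \<Rightarrow> real" where
  "supn x = Max (range (\<lambda>i. \<bar>x $ i\<bar>))"

definition cube :: "real^'n \<Rightarrow> real \<Rightarrow> (real^'n) set" where
  "cube a l = {x. \<forall>i. a $ i \<le> x $ i \<and> x $ i < a $ i + l}"

definition valid_shift :: "(int \<Rightarrow> real^'n) \<Rightarrow> bool" where
  "valid_shift \<omega> \<longleftrightarrow> (\<forall>j i. \<omega> j $ i \<in> {0, 1})"

definition dshift :: "(int \<Rightarrow> real^'n) \<Rightarrow> int \<Rightarrow> real^'n" where
  "dshift \<omega> j = (\<Sum>i. (2 powr (- (real_of_int j + 1 + real i))) *\<^sub>R \<omega> (j + 1 + int i))"

(* dyadic grid D^omega, cubes represented as (corner, side length);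
   D^omega = { 2^-j ([0,1)^n + m) + sum_{i>j} 2^-i omega_i }.  omega = 0 gives the standard grid. *)
definition dyadic_grid :: "(int \<Rightarrow> real^'n) \<Rightarrow> ((real^'n) \<times> real) set" where
  "dyadic_grid \<omega> = {(a, l). \<exists>(j::int) (m::'n \<Rightarrow> int).
      l = 2 powr (- real_of_int j) \<and>
      a = (2 powr (- real_of_int j)) *\<^sub>R (\<chi> i. real_of_int (m i)) + dshift \<omega> j}"

definition sdist :: "(real^'n) set \<Rightarrow> (real^'n) set \<Rightarrow> real" where
  "sdist A B = Inf {supn (x - y) | x y. x \<in> A \<and> y \<in> B}"

definition bad_cube :: "(int \<Rightarrow> real^'n) \<Rightarrow> nat \<Rightarrow> real \<Rightarrow> real^'n \<Rightarrow> real \<Rightarrow> bool" where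
  "bad_cube \<omega> r \<gamma> a l \<longleftrightarrow> (\<exists>b L. (b, L) \<in> dyadic_grid \<omega> \<and> L \<ge> 2 ^ r * l \<and>
      sdist (cube a l) (frontier (cube b L)) \<le> l powr \<gamma> * L powr (1 - \<gamma>))"

definition good_cube :: "(int \<Rightarrow> real^'n) \<Rightarrow> nat \<Rightarrow> real \<Rightarrow> real^'n \<Rightarrow> real \<Rightarrow> bool" where
  "good_cube \<omega> r \<gamma> a l \<longleftrightarrow> (a, l) \<in> dyadic_grid \<omega> \<and> \<not> bad_cube \<omega> r \<gamma> a l"

end

theory Submission
  imports Defs "HOL-Analysis.Analysis"
begin

lemma supn_ge: "\<bar>x $ i\<bar> \<le> supn x"
  unfolding supn_def by (rule Max_ge) auto

lemma supn_nonneg: "0 \<le> supn x"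
  using supn_ge[of x undefined] by linarith

lemma supn_le: "(\<And>i. \<bar>x $ i\<bar> \<le> c) \<Longrightarrow> supn x \<le> c"
  unfolding supn_def by (subst Max_le_iff) auto

lemma supn_triangle: "supn (x + y) \<le> supn x + supn y"
  by (rule supn_le) (metis abs_triangle_ineq add_mono supn_ge vector_add_component order_trans)

lemma supn_minus: "supn (- x) = supn x"
  unfolding supn_def by simp

lemma supn_scale: "supn (c *\<^sub>R x) = \<bar>c\<bar> * supn x"
proof -
  have "range (\<lambda>i. \<bar>(c *\<^sub>R x) $ i\<bar>) = (\<lambda>v. \<bar>c\<bar> * v) ` range (\<lambda>i. \<bar>x $ i\<bar>)"
    by (auto simp: abs_mult)
  then show ?thesis unfolding supn_def
    by (simp add: mono_Max_commute[symmetric] monoI mult_left_mono)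
qed

lemma supn_measurable[measurable]: "supn \<in> borel_measurable borel"
  unfolding supn_def by measurable

lemma supn_sub: "supn (x - z) \<le> supn (x - y - z) + supn y"
  using supn_triangle[of "x - y - z" y] by (simp add: algebra_simps)

lemma G1:
  fixes v :: "real^'n" and t p :: real
  assumes t: "t > 0"
  shows "(\<integral>\<^sup>+z. ennreal (t powr (p - real CARD('n)) / (t + supn (v - z)) powr p) \<partial>lborel)
       = (\<integral>\<^sup>+(u::real^'n). ennreal (1 / (1 + supn u) powr p) \<partial>lborel)"
proof -
  let ?f = "\<lambda>z::real^'n. ennreal (t powr (p - real CARD('n)) / (t + supn (v - z)) powr p)"
  have m: "?f \<in> borel_measurable borel" by measurable
  have "(\<integral>\<^sup>+z. ?f z \<partial>lborel) = (\<integral>\<^sup>+x. ennreal (\<bar>-t\<bar> ^ DIM(real^'n)) * ?f (v + (-t) *\<^sub>R x) \<partial>lborel)"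
    by (subst lborel_affine[of "-t" v]) (use t m in \<open>simp_all add: nn_integral_density nn_integral_distr\<close>)
  also have "\<dots> = (\<integral>\<^sup>+(u::real^'n). ennreal (1 / (1 + supn u) powr p) \<partial>lborel)"
  proof -
   have "ennreal (\<bar>-t\<bar> ^ DIM(real^'n)) * ?f (v + (-t) *\<^sub>R x) = ennreal (1 / (1 + supn x) powr p)" for x
   proof -
    have s: "supn (v - (v + (-t) *\<^sub>R x)) = t * supn x"
      using supn_scale[of t x] t by simp
    have e: "t + t * supn x = t * (1 + supn x)" by (simp add: algebra_simps)
    have pos: "0 < 1 + supn x" using supn_nonneg[of x] by linarith
    have "t ^ CARD('n) * (t powr (p - real CARD('n)) / (t * (1 + supn x)) powr p) = 1 / (1 + supn x) powr p"
    proof -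
      have pm: "(t * (1 + supn x)) powr p = t powr p * (1 + supn x) powr p"
        using t pos by (simp add: powr_mult)
      have "t powr p > 0" "(1 + supn x) powr p > 0" using t pos by auto
      moreover have "t ^ CARD('n) * t powr (p - real CARD('n)) = t powr p"
        using t by (simp add: powr_diff powr_realpow)
      ultimately show ?thesis unfolding pm by (simp add: field_simps)
    qed
    then show "ennreal (\<bar>-t\<bar> ^ DIM(real^'n)) * ?f (v + (-t) *\<^sub>R x) = ennreal (1 / (1 + supn x) powr p)"
    proof -
      have s2: "t + supn (v - (v + (-t) *\<^sub>R x)) = t * (1 + supn x)" using s e by simp
      show ?thesis unfolding s2 using t pos \<open>t ^ CARD('n) * _ = _\<close>
        by (simp add: ennreal_mult'[symmetric] del: scaleR_minus_left)
    qed
   qed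
   then show ?thesis by simp
  qed
  finally show ?thesis .
qed

lemma G3:
  fixes a :: real
  assumes a: "a > 1"
  shows "(\<integral>\<^sup>+x. ennreal (1 / (1 + \<bar>x\<bar>) powr a) \<partial>lborel) < \<infinity>"
proof -
  define g where "g = (\<lambda>x::real. ennreal (indicator {0..} x * (1 / (1 + x) powr a)))"
  have gm[measurable]: "g \<in> borel_measurable borel" unfolding g_def by measurable
  have le: "ennreal (1 / (1 + \<bar>x\<bar>) powr a) \<le> g x + g (-x)" for x
  proof (cases "x \<ge> 0")
    case True
    then have "ennreal (1 / (1 + \<bar>x\<bar>) powr a) = g x" unfolding g_def by simp
    then show ?thesis by (simp add: add_increasing2)
  next
    case False
    then have "ennreal (1 / (1 + \<bar>x\<bar>) powr a) = g (-x)" unfolding g_def by simp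
    then show ?thesis by (simp add: add_increasing)
  qed
  have "(\<integral>\<^sup>+x. ennreal (1 / (1 + \<bar>x\<bar>) powr a) \<partial>lborel) \<le> (\<integral>\<^sup>+x. g x + g (-x) \<partial>lborel)"
    by (rule nn_integral_mono) (rule le)
  also have "\<dots> = (\<integral>\<^sup>+x. g x \<partial>lborel) + (\<integral>\<^sup>+x. g (-x) \<partial>lborel)"
    by (rule nn_integral_add) measurable
  also have "(\<integral>\<^sup>+x. g (-x) \<partial>lborel) = (\<integral>\<^sup>+x. g x \<partial>lborel)"
    using nn_integral_real_affine[OF gm, of "-1" 0] by simp
  also have "(\<integral>\<^sup>+x. g x \<partial>lborel) = (\<integral>\<^sup>+x. g (-1 + 1 * x) \<partial>lborel)"
    using nn_integral_real_affine[OF gm, of "1" "-1"] by simp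
  also have "\<dots> = (\<integral>\<^sup>+x. ennreal (indicator {1..} x * x powr (-a)) \<partial>lborel)"
  proof -
    have "g (-1 + 1 * x) = ennreal (indicator {1..} x * x powr (-a))" for x
      unfolding g_def by (auto simp: indicator_def powr_minus_divide)
    then show ?thesis by simp
  qed
  also have "\<dots> = ennreal (-(1 powr (-a+1)) / (-a+1))"
  proof -
    have hi: "((\<lambda>x. x powr (-a)) has_integral (-(1 powr (-a+1)) / (-a+1))) {1..}"
      using has_integral_powr_to_inf[of "-a" 1] a by simp
    show ?thesis by (rule nn_integral_has_integral_lebesgue[OF _ hi]) simp
  qed
  finally have "(\<integral>\<^sup>+x. ennreal (1 / (1 + \<bar>x\<bar>) powr a) \<partial>lborel) \<le> ennreal (-(1 powr (-a+1)) / (-a+1)) + ennreal (-(1 powr (-a+1)) / (-a+1))" .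
  moreover have "ennreal (-(1 powr (-a+1)) / (-a+1)) + ennreal (-(1 powr (-a+1)) / (-a+1)) < \<infinity>"
    unfolding infinity_ennreal_def by (simp only: ennreal_add_less_top ennreal_less_top)
  ultimately show ?thesis by (rule le_less_trans)
qed

lemma basis_inner_le_supn:
  fixes u :: "real^'n"
  assumes "b \<in> Basis" shows "\<bar>u \<bullet> b\<bar> \<le> supn u"
proof -
  obtain i where "b = axis i 1" using assms unfolding Basis_vec_def by auto
  then show ?thesis using supn_ge[of u i] by (simp add: inner_axis)
qed

lemma G2:
  fixes p :: real
  assumes p: "p > real CARD('n)"
  shows "(\<integral>\<^sup>+(u::real^'n). ennreal (1 / (1 + supn u) powr p) \<partial>lborel) < \<infinity>"
proof -
  define a where "a = p / real CARD('n)"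
  have a1: "a > 1" using p unfolding a_def by simp
  define f where "f = (\<lambda>(b::real^'n) (x::real). ennreal (1 / (1 + \<bar>x\<bar>) powr a))"
  have cardB: "card (Basis :: (real^'n) set) = CARD('n)" by simp
  have pt: "ennreal (1 / (1 + supn u) powr p) \<le> (\<Prod>b\<in>Basis. f b (u \<bullet> b))" for u :: "real^'n"
  proof -
    have pos: "0 < 1 + supn u" using supn_nonneg[of u] by linarith
    have "1 / (1 + supn u) powr p = (\<Prod>b\<in>(Basis::(real^'n) set). 1 / (1 + supn u) powr a)"
    proof -
      have "(\<Prod>b\<in>(Basis::(real^'n) set). 1 / (1 + supn u) powr a) = (1 / (1 + supn u) powr a) ^ CARD('n)"
        by (simp add: cardB)
      also have "\<dots> = 1 / ((1 + supn u) powr a) ^ CARD('n)" by (simp add: power_one_over)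
      also have "((1 + supn u) powr a) ^ CARD('n) = (1 + supn u) powr p"
        using pos by (simp add: a_def powr_realpow[symmetric] powr_powr)
      finally show ?thesis by simp
    qed
    also have "\<dots> \<le> (\<Prod>b\<in>(Basis::(real^'n) set). 1 / (1 + \<bar>u \<bullet> b\<bar>) powr a)"
    proof (rule prod_mono)
      fix b :: "real^'n" assume b: "b \<in> Basis"
      have "\<bar>u \<bullet> b\<bar> \<le> supn u" by (rule basis_inner_le_supn[OF b])
      then have "(1 + \<bar>u \<bullet> b\<bar>) powr a \<le> (1 + supn u) powr a"
        using a1 by (intro powr_mono2) auto
      then show "0 \<le> 1 / (1 + supn u) powr a \<and> 1 / (1 + supn u) powr a \<le> 1 / (1 + \<bar>u \<bullet> b\<bar>) powr a"
        using pos by (auto intro!: divide_left_mono)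
    qed
    finally have r: "1 / (1 + supn u) powr p \<le> (\<Prod>b\<in>(Basis::(real^'n) set). 1 / (1 + \<bar>u \<bullet> b\<bar>) powr a)" .
    have "(\<Prod>b\<in>Basis. f b (u \<bullet> b)) = ennreal (\<Prod>b\<in>(Basis::(real^'n) set). 1 / (1 + \<bar>u \<bullet> b\<bar>) powr a)"
      unfolding f_def by (rule prod_ennreal) simp
    then show ?thesis using r by (simp add: ennreal_leI)
  qed
  have "(\<integral>\<^sup>+(u::real^'n). ennreal (1 / (1 + supn u) powr p) \<partial>lborel) \<le> (\<integral>\<^sup>+(u::real^'n). (\<Prod>b\<in>Basis. f b (u \<bullet> b)) \<partial>lborel)"
    by (rule nn_integral_mono) (rule pt)
  also have "\<dots> = (\<Prod>b\<in>(Basis::(real^'n) set). (\<integral>\<^sup>+x. f b x \<partial>lborel))"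
    by (rule nn_integral_lborel_prod) (auto simp: f_def)
  also have "\<dots> < \<infinity>"
  proof -
    have "(\<integral>\<^sup>+x. f b x \<partial>lborel) < \<infinity>" for b unfolding f_def using G3[OF a1] by simp
    then have "(\<integral>\<^sup>+x. f b x \<partial>lborel) \<noteq> top" for b by (simp add: less_top)
    then have "(\<Prod>b\<in>(Basis::(real^'n) set). (\<integral>\<^sup>+x. f b x \<partial>lborel)) \<noteq> top"
      by (subst ennreal_prod_eq_top) auto
    then show ?thesis by (simp add: less_top)
  qed
  finally show ?thesis .
qed

lemma geo:
  fixes x z :: "real^'n"
  assumes xJ: "x \<in> J" and zJ: "z \<notin> J" and xI: "x \<in> I" and sd: "sdist I (frontier J) > D"
  shows "supn (x - z) > D"
proof -
  have "closed_segment x z \<inter> frontier J \<noteq> {}"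
    by (rule connected_Int_frontier) (use xJ zJ in \<open>auto\<close>)
  then obtain p where p: "p \<in> closed_segment x z" "p \<in> frontier J" by blast
  then obtain u where u: "0 \<le> u" "u \<le> 1" "p = (1 - u) *\<^sub>R x + u *\<^sub>R z"
    unfolding in_segment by auto
  have "x - p = u *\<^sub>R (x - z)" using u by (simp add: algebra_simps)
  then have sp: "supn (x - p) \<le> supn (x - z)"
    using u supn_nonneg[of "x - z"] by (simp add: supn_scale mult_left_le_one_le)
  have "sdist I (frontier J) \<le> supn (x - p)"
    unfolding sdist_def
  proof (rule cInf_lower)
    show "supn (x - p) \<in> {supn (x - y) |x y. x \<in> I \<and> y \<in> frontier J}" using xI p by blast
    show "bdd_below {supn (x - y) |x y. x \<in> I \<and> y \<in> frontier J}"
      by (rule bdd_belowI[of _ 0]) (auto simp: supn_nonneg)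
  qed
  then show ?thesis using sd sp by linarith
qed

lemma powr_le_base_le1:
  fixes c e1 e2 :: real
  assumes "0 < c" "c \<le> 1" "e1 \<le> e2"
  shows "c powr e2 \<le> c powr e1"
  using assms by (simp add: powr_mono')

lemma RL3:
  fixes l t D L \<gamma> \<alpha> \<beta> :: real and k :: nat
  assumes l: "l > 0" and t: "0 < t" "t < l" and k: "k \<ge> 1"
    and L: "L = 2 ^ (k - 1) * l" and D: "D = l powr \<gamma> * L powr (1 - \<gamma>)"
    and b: "\<beta> > 0" and ab: "2 * \<beta> * (1 - \<gamma>) = \<alpha>"
  shows "D > 0" "(2 * t / D) powr (2 * \<beta>) \<le> 2 powr (2 * \<beta> + \<alpha>) * 2 powr (- \<alpha> * real k)"
proof -
  have "L powr (1 - \<gamma>) = (2 ^ (k - 1)) powr (1 - \<gamma>) * l powr (1 - \<gamma>)"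
    unfolding L using l by (simp add: powr_mult)
  also have "(2 ^ (k - 1)) powr (1 - \<gamma>) = (2::real) powr (real (k - 1) * (1 - \<gamma>))"
    by (simp add: powr_realpow[symmetric] powr_powr)
  finally have "D = l powr \<gamma> * l powr (1 - \<gamma>) * 2 powr (real (k - 1) * (1 - \<gamma>))"
    unfolding D by simp
  also have "l powr \<gamma> * l powr (1 - \<gamma>) = l" using l by (simp add: powr_add[symmetric])
  finally have D2: "D = l * 2 powr (real (k - 1) * (1 - \<gamma>))" .
  then show Dp: "D > 0" using l by simp
  have "2 * t / D \<le> 2 * l / D" using t Dp by (simp add: divide_right_mono)
  also have "\<dots> = 2 powr (1 - real (k - 1) * (1 - \<gamma>))"
    using l unfolding D2 by (simp add: powr_diff)
  finally have q: "2 * t / D \<le> 2 powr (1 - real (k - 1) * (1 - \<gamma>))" .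
  have "(2 * t / D) powr (2 * \<beta>) \<le> (2 powr (1 - real (k - 1) * (1 - \<gamma>))) powr (2 * \<beta>)"
    using q t Dp b by (intro powr_mono2) auto
  also have "\<dots> = 2 powr ((1 - real (k - 1) * (1 - \<gamma>)) * (2 * \<beta>))" by (simp add: powr_powr)
  also have "(1 - real (k - 1) * (1 - \<gamma>)) * (2 * \<beta>) = 2 * \<beta> + \<alpha> + (- \<alpha> * real k)"
  proof -
    have "real (k - 1) = real k - 1" using k by simp
    moreover have "(1 - real (k - 1) * (1 - \<gamma>)) * (2 * \<beta>) = 2 * \<beta> - real (k - 1) * (2 * \<beta> * (1 - \<gamma>))"
      by (simp add: algebra_simps)
    ultimately show ?thesis unfolding ab by (simp add: algebra_simps)
  qed
  also have "(2::real) powr (2 * \<beta> + \<alpha> + (- \<alpha> * real k)) = 2 powr (2 * \<beta> + \<alpha>) * 2 powr (- \<alpha> * real k)"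
    by (rule powr_add)
  finally show "(2 * t / D) powr (2 * \<beta>) \<le> 2 powr (2 * \<beta> + \<alpha>) * 2 powr (- \<alpha> * real k)" .
qed

lemma RL1:
  fixes t D s \<alpha> \<beta> n :: real
  assumes t: "t > 0" and D: "D > 0" and s: "s \<ge> D / 2" and b: "0 < \<beta>"
  shows "t powr \<alpha> / (t + s) powr (n + \<alpha>) \<le> (2 * t / D) powr \<beta> * (t powr (\<alpha> - \<beta>) / (t + s) powr (n + (\<alpha> - \<beta>)))"
proof -
  have ts: "t + s > 0" using t s D by linarith
  have c: "t / (t + s) \<le> 2 * t / D"
  proof -
    have "t / (t + s) \<le> t / (D / 2)" using t D s by (intro divide_left_mono) auto
    moreover have "t / (D / 2) = 2 * t / D" using D by (simp add: field_simps)
    ultimately show ?thesis by (rule ord_le_eq_trans)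
  qed
  have e: "t powr \<alpha> / (t + s) powr (n + \<alpha>) = (t / (t + s)) powr \<beta> * (t powr (\<alpha> - \<beta>) / (t + s) powr (n + (\<alpha> - \<beta>)))"
  proof -
    have "t powr \<alpha> = t powr \<beta> * t powr (\<alpha> - \<beta>)" using t by (simp add: powr_add[symmetric])
    moreover have "(t + s) powr (n + \<alpha>) = (t + s) powr \<beta> * (t + s) powr (n + (\<alpha> - \<beta>))"
      using ts by (simp add: powr_add[symmetric])
    ultimately show ?thesis using t ts by (simp add: powr_divide)
  qed
  have "(t / (t + s)) powr \<beta> \<le> (2 * t / D) powr \<beta>"
    using c t ts b by (intro powr_mono2) auto
  then show ?thesis unfolding e by (rule mult_right_mono) (use t ts in simp)
qed

lemma RL2:
  fixes t D s m m' \<beta> :: real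
  assumes t: "t > 0" and D: "D > 0" and s: "s \<ge> D / 2" and b: "0 < \<beta>" and m: "m = 2 * \<beta> + m'"
  shows "(t / (t + s)) powr m \<le> (2 * t / D) powr (2 * \<beta>) * (t / (t + s)) powr m'"
proof -
  have ts: "t + s > 0" using t s D by linarith
  have c: "t / (t + s) \<le> 2 * t / D"
  proof -
    have "t / (t + s) \<le> t / (D / 2)" using t D s by (intro divide_left_mono) auto
    moreover have "t / (D / 2) = 2 * t / D" using D by (simp add: field_simps)
    ultimately show ?thesis by (rule ord_le_eq_trans)
  qed
  have "(t / (t + s)) powr m = (t / (t + s)) powr (2 * \<beta>) * (t / (t + s)) powr m'"
    unfolding m using t ts by (simp add: powr_add)
  also have "\<dots> \<le> (2 * t / D) powr (2 * \<beta>) * (t / (t + s)) powr m'"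
    using c t ts b by (intro mult_right_mono powr_mono2) auto
  finally show ?thesis .
qed

lemma WL:
  fixes t q :: real
  assumes t: "t > 0"
  shows "(\<integral>\<^sup>+(y::real^'n). ennreal ((t / (t + supn y)) powr q / t ^ CARD('n)) \<partial>lborel)
       = (\<integral>\<^sup>+(u::real^'n). ennreal (1 / (1 + supn u) powr q) \<partial>lborel)"
proof -
  have "(t / (t + supn y)) powr q / t ^ CARD('n) = t powr (q - real CARD('n)) / (t + supn (0 - y)) powr q" for y :: "real^'n"
  proof -
    have s: "t + supn y > 0" using t supn_nonneg[of y] by linarith
    have "t ^ CARD('n) = t powr real CARD('n)" using t by (simp add: powr_realpow)
    then show ?thesis using t s by (simp add: supn_minus powr_divide powr_diff)
  qed
  then show ?thesis using G1[OF t, of q 0] by simp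
qed

lemma core:
  fixes \<alpha> lam1 :: real and r k :: nat and \<omega> :: "int \<Rightarrow> real^'n" and a b x :: "real^'n" and l t L :: real
  assumes lam: "lam1 > 2" and apos: "0 < \<alpha>" and ale: "\<alpha> \<le> real CARD('n) * (lam1 - 2) / 2"
    and good: "good_cube \<omega> r (\<alpha> / (2 * (real CARD('n) + \<alpha>))) a l" and k: "k \<ge> 1"
    and xI: "x \<in> cube a l" and t1: "l / 2 < t" and t2: "t < l"
    and bL: "(b, L) \<in> dyadic_grid \<omega>" and L: "L = 2 ^ (k - 1) * l" and sub: "cube a l \<subseteq> cube b L"
  defines "\<beta> \<equiv> \<alpha> * (real CARD('n) + \<alpha>) / (2 * real CARD('n) + \<alpha>)"
  defines "A0 \<equiv> (\<integral>\<^sup>+(u::real^'n). ennreal (1 / (1 + supn u) powr (real CARD('n) + \<alpha>)) \<partial>lborel)"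
  defines "Ab \<equiv> (\<integral>\<^sup>+(u::real^'n). ennreal (1 / (1 + supn u) powr (real CARD('n) + (\<alpha> - \<beta>))) \<partial>lborel)"
  defines "B1 \<equiv> (\<integral>\<^sup>+(u::real^'n). ennreal (1 / (1 + supn u) powr (real CARD('n) * lam1)) \<partial>lborel)"
  defines "B2 \<equiv> (\<integral>\<^sup>+(u::real^'n). ennreal (1 / (1 + supn u) powr (real CARD('n) * lam1 - 2 * \<beta>)) \<partial>lborel)"
  shows "(\<integral>\<^sup>+ y\<^sub>1.
        (\<integral>\<^sup>+ z\<^sub>1 \<in> - cube b L.
            ennreal (t powr \<alpha> / (t + supn (x - y\<^sub>1 - z\<^sub>1)) powr (real CARD('n) + \<alpha>)) \<partial>lborel) ^ 2
        * ennreal ((t / (t + supn y\<^sub>1)) powr (real CARD('n) * lam1) / t ^ CARD('n)) \<partial>lborel)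
     \<le> (A0\<^sup>2 + Ab\<^sup>2) * (B1 + B2) * ennreal (2 powr (2 * \<beta> + \<alpha> + \<alpha> * real r)) * ennreal (2 powr (- \<alpha> * real k))"
proof -
  let ?n = "real CARD('n)"
  let ?J = "cube b L"
  define \<gamma> where "\<gamma> = \<alpha> / (2 * (?n + \<alpha>))"
  define m where "m = ?n * lam1"
  define m' where "m' = m - 2 * \<beta>"
  have npos: "?n \<ge> 1" by simp
  have bpos: "\<beta> > 0" unfolding \<beta>_def using apos npos by simp
  have blt: "\<beta> < \<alpha>" unfolding \<beta>_def using apos npos by (simp add: field_simps)
  have ab: "2 * \<beta> * (1 - \<gamma>) = \<alpha>"
  proof -
    have d1: "?n + \<alpha> > 0" "2 * ?n + \<alpha> > 0" using apos npos by auto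
    have "1 - \<gamma> = (2 * ?n + \<alpha>) / (2 * (?n + \<alpha>))" unfolding \<gamma>_def using d1 by (simp add: field_simps)
    then have "2 * \<beta> * (1 - \<gamma>) = (2 * (\<alpha> * (?n + \<alpha>)) * (2 * ?n + \<alpha>)) / ((2 * ?n + \<alpha>) * (2 * (?n + \<alpha>)))"
      unfolding \<beta>_def by simp
    also have "\<dots> = \<alpha>"
    proof -
      have nz: "(2 * ?n + \<alpha>) * (2 * (?n + \<alpha>)) \<noteq> 0" using d1 by simp
      have "2 * (\<alpha> * (?n + \<alpha>)) * (2 * ?n + \<alpha>) = \<alpha> * ((2 * ?n + \<alpha>) * (2 * (?n + \<alpha>)))"
        by (simp add: algebra_simps)
      then show ?thesis using nz by (metis nonzero_mult_div_cancel_right)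
    qed
    finally show ?thesis .
  qed
  have mm': "m = 2 * \<beta> + m'" unfolding m'_def by simp
  have lpos: "l > 0" using good unfolding good_cube_def dyadic_grid_def by auto
  have tpos: "t > 0" using t1 lpos by linarith
  define F where "F = (\<lambda>y. (\<integral>\<^sup>+ z \<in> - ?J. ennreal (t powr \<alpha> / (t + supn (x - y - z)) powr (?n + \<alpha>)) \<partial>lborel))"
  define W where "W = (\<lambda>y::real^'n. ennreal ((t / (t + supn y)) powr m / t ^ CARD('n)))"
  define W' where "W' = (\<lambda>y::real^'n. ennreal ((t / (t + supn y)) powr m' / t ^ CARD('n)))"
  have W'm[measurable]: "W' \<in> borel_measurable borel" unfolding W'_def by measurable
  have Wm[measurable]: "W \<in> borel_measurable borel" unfolding W_def by measurable
  have intW: "(\<integral>\<^sup>+y. W y \<partial>lborel) = B1" unfolding W_def B1_def m_def by (rule WL[OF tpos])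
  have intW': "(\<integral>\<^sup>+y. W' y \<partial>lborel) = B2" unfolding W'_def B2_def m'_def m_def by (rule WL[OF tpos])
  have FA0: "F y \<le> A0" for y
  proof -
    have "F y \<le> (\<integral>\<^sup>+z. ennreal (t powr \<alpha> / (t + supn (x - y - z)) powr (?n + \<alpha>)) \<partial>lborel)"
      unfolding F_def by (intro nn_integral_mono) (auto simp: indicator_def)
    also have "\<dots> = A0" using G1[OF tpos, of "?n + \<alpha>" "x - y"] unfolding A0_def by simp
    finally show ?thesis .
  qed
  have WW': "W y \<le> W' y" for y
  proof -
    have s: "t + supn y > 0" using tpos supn_nonneg[of y] by linarith
    have "(t / (t + supn y)) powr m \<le> (t / (t + supn y)) powr m'"
      using tpos s supn_nonneg[of y] bpos unfolding m'_def by (intro powr_le_base_le1) auto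
    then show ?thesis unfolding W_def W'_def using tpos by (intro ennreal_leI divide_right_mono) auto
  qed
  have goalform: "(\<integral>\<^sup>+ y\<^sub>1.
        (\<integral>\<^sup>+ z\<^sub>1 \<in> - cube b L.
            ennreal (t powr \<alpha> / (t + supn (x - y\<^sub>1 - z\<^sub>1)) powr (real CARD('n) + \<alpha>)) \<partial>lborel) ^ 2
        * ennreal ((t / (t + supn y\<^sub>1)) powr (real CARD('n) * lam1) / t ^ CARD('n)) \<partial>lborel)
     = (\<integral>\<^sup>+y. F y ^ 2 * W y \<partial>lborel)" unfolding F_def W_def m_def by (rule refl)
  define K where "K = (A0\<^sup>2 + Ab\<^sup>2) * (B1 + B2) * ennreal (2 powr (2 * \<beta> + \<alpha> + \<alpha> * real r)) * ennreal (2 powr (- \<alpha> * real k))"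
  have SS: "A0\<^sup>2 \<le> A0\<^sup>2 + Ab\<^sup>2" "Ab\<^sup>2 \<le> A0\<^sup>2 + Ab\<^sup>2" "B1 \<le> B1 + B2" "B2 \<le> B1 + B2"
    by (auto simp: add_increasing2 add_increasing)
  have "(\<integral>\<^sup>+y. F y ^ 2 * W y \<partial>lborel) \<le> K"
  proof (cases "r \<le> k - 1")
    case False
    have "(\<integral>\<^sup>+y. F y ^ 2 * W y \<partial>lborel) \<le> (\<integral>\<^sup>+y. A0\<^sup>2 * W y \<partial>lborel)"
      by (intro nn_integral_mono mult_right_mono power_mono FA0) auto
    also have "\<dots> = A0\<^sup>2 * B1" using intW by (simp add: nn_integral_cmult)
    also have "\<dots> \<le> K"
    proof -
      have "(2::real) powr (2 * \<beta> + \<alpha> + \<alpha> * real r) * 2 powr (- \<alpha> * real k) = 2 powr (2 * \<beta> + \<alpha> + \<alpha> * real r + (- \<alpha> * real k))"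
        by (rule powr_add[symmetric])
      moreover have "2 * \<beta> + \<alpha> + \<alpha> * real r + (- \<alpha> * real k) \<ge> 0"
      proof -
        have "real k \<le> real r" using False by simp
        then have "\<alpha> * real k \<le> \<alpha> * real r" using apos by (simp add: mult_left_mono)
        then show ?thesis using bpos apos by linarith
      qed
      ultimately have e: "1 \<le> (2::real) powr (2 * \<beta> + \<alpha> + \<alpha> * real r) * 2 powr (- \<alpha> * real k)"
        by (simp add: ge_one_powr_ge_zero)
      have "A0\<^sup>2 * B1 \<le> (A0\<^sup>2 + Ab\<^sup>2) * (B1 + B2)" using SS by (intro mult_mono) auto
      then have "A0\<^sup>2 * B1 * 1 \<le> (A0\<^sup>2 + Ab\<^sup>2) * (B1 + B2) * ennreal ((2::real) powr (2 * \<beta> + \<alpha> + \<alpha> * real r) * 2 powr (- \<alpha> * real k))"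
        using e by (intro mult_mono) (auto simp: ennreal_leI)
      then show ?thesis unfolding K_def by (simp add: ennreal_mult' mult.assoc)
    qed
    finally show ?thesis .
  next
    case True
    define D where "D = l powr \<gamma> * L powr (1 - \<gamma>)"
    have Dpos: "D > 0" and qb: "(2 * t / D) powr (2 * \<beta>) \<le> 2 powr (2 * \<beta> + \<alpha>) * 2 powr (- \<alpha> * real k)"
      using RL3[OF lpos tpos t2 k L D_def bpos ab] by auto
    have Lge: "L \<ge> 2 ^ r * l"
    proof -
      have "(2::real) ^ r \<le> 2 ^ (k - 1)" using True by (intro power_increasing) auto
      then show ?thesis unfolding L using lpos by simp
    qed
    have sd: "sdist (cube a l) (frontier ?J) > D"
      using good bL Lge unfolding good_cube_def bad_cube_def D_def \<gamma>_def by force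
    have far: "supn (x - z) > D" if "z \<notin> ?J" for z
      using geo[OF subsetD[OF sub xI] that xI sd] .
    define q where "q = 2 * t / D"
    have qpos: "q > 0" unfolding q_def using tpos Dpos by simp
    have q2: "(q powr \<beta>) ^ 2 = q powr (2 * \<beta>)"
      using qpos by (simp add: power2_eq_square powr_add[symmetric])
    have pt: "F y ^ 2 * W y \<le> (A0\<^sup>2 + Ab\<^sup>2) * ennreal (q powr (2 * \<beta>)) * W' y" for y
    proof (cases "supn y \<le> D / 2")
      case True
      have "F y \<le> (\<integral>\<^sup>+z. ennreal (q powr \<beta>) * ennreal (t powr (\<alpha> - \<beta>) / (t + supn (x - y - z)) powr (?n + (\<alpha> - \<beta>))) \<partial>lborel)"
        unfolding F_def
      proof (intro nn_integral_mono)
        fix z :: "real^'n"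
        show "ennreal (t powr \<alpha> / (t + supn (x - y - z)) powr (?n + \<alpha>)) * indicator (- ?J) z
           \<le> ennreal (q powr \<beta>) * ennreal (t powr (\<alpha> - \<beta>) / (t + supn (x - y - z)) powr (?n + (\<alpha> - \<beta>)))"
        proof (cases "z \<in> ?J")
          case True then show ?thesis by simp
        next
          case False
          have "supn (x - y - z) \<ge> D / 2" using far[OF False] supn_sub[of x z y] True by linarith
          then have "t powr \<alpha> / (t + supn (x - y - z)) powr (?n + \<alpha>) \<le> q powr \<beta> * (t powr (\<alpha> - \<beta>) / (t + supn (x - y - z)) powr (?n + (\<alpha> - \<beta>)))"
            unfolding q_def by (rule RL1[OF tpos Dpos _ bpos])
          then show ?thesis using False by (simp add: ennreal_mult'[symmetric] ennreal_leI)
        qed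
      qed
      also have "\<dots> = ennreal (q powr \<beta>) * Ab"
      proof -
        have "(\<integral>\<^sup>+z. ennreal (q powr \<beta>) * ennreal (t powr (\<alpha> - \<beta>) / (t + supn (x - y - z)) powr (?n + (\<alpha> - \<beta>))) \<partial>lborel)
          = ennreal (q powr \<beta>) * (\<integral>\<^sup>+z. ennreal (t powr (\<alpha> - \<beta>) / (t + supn (x - y - z)) powr (?n + (\<alpha> - \<beta>))) \<partial>lborel)"
          by (rule nn_integral_cmult) measurable
        also have "(\<integral>\<^sup>+z. ennreal (t powr (\<alpha> - \<beta>) / (t + supn (x - y - z)) powr (?n + (\<alpha> - \<beta>))) \<partial>lborel) = Ab"
          using G1[OF tpos, of "?n + (\<alpha> - \<beta>)" "x - y"] unfolding Ab_def by simp
        finally show ?thesis .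
      qed
      finally have f1: "F y \<le> ennreal (q powr \<beta>) * Ab" .
      have "F y ^ 2 \<le> (ennreal (q powr \<beta>) * Ab) ^ 2" by (rule power_mono[OF f1]) simp
      also have "\<dots> = ennreal (q powr (2 * \<beta>)) * Ab\<^sup>2"
      proof -
        have "(ennreal (q powr \<beta>)) ^ 2 = ennreal (q powr (2 * \<beta>))"
          by (subst ennreal_power) (auto simp: q2)
        then show ?thesis by (simp add: power_mult_distrib)
      qed
      finally have f2: "F y ^ 2 \<le> ennreal (q powr (2 * \<beta>)) * Ab\<^sup>2" .
      have "F y ^ 2 * W y \<le> ennreal (q powr (2 * \<beta>)) * Ab\<^sup>2 * W' y"
        by (intro mult_mono f2 WW') auto
      also have "\<dots> = Ab\<^sup>2 * ennreal (q powr (2 * \<beta>)) * W' y"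
        by (rule arg_cong[where f="\<lambda>u. u * W' y"], rule mult.commute)
      also have "\<dots> \<le> (A0\<^sup>2 + Ab\<^sup>2) * ennreal (q powr (2 * \<beta>)) * W' y"
        by (intro mult_right_mono SS(2)) auto
      finally show ?thesis .
    next
      case False
      have s: "t + supn y > 0" using tpos supn_nonneg[of y] by linarith
      have "(t / (t + supn y)) powr m \<le> q powr (2 * \<beta>) * (t / (t + supn y)) powr m'"
        unfolding q_def using False by (intro RL2[OF tpos Dpos _ bpos mm']) auto
      then have "(t / (t + supn y)) powr m / t ^ CARD('n) \<le> q powr (2 * \<beta>) * ((t / (t + supn y)) powr m' / t ^ CARD('n))"
        using tpos by (simp add: divide_right_mono)
      then have w: "W y \<le> ennreal (q powr (2 * \<beta>)) * W' y"
        unfolding W_def W'_def by (simp add: ennreal_mult'[symmetric] ennreal_leI)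
      have "F y ^ 2 * W y \<le> A0\<^sup>2 * (ennreal (q powr (2 * \<beta>)) * W' y)"
        by (intro mult_mono power_mono FA0 w) auto
      also have "\<dots> \<le> (A0\<^sup>2 + Ab\<^sup>2) * ennreal (q powr (2 * \<beta>)) * W' y"
        using SS(1) by (simp add: mult_right_mono mult.assoc)
      finally show ?thesis .
    qed
    have "(\<integral>\<^sup>+y. F y ^ 2 * W y \<partial>lborel) \<le> (\<integral>\<^sup>+y. (A0\<^sup>2 + Ab\<^sup>2) * ennreal (q powr (2 * \<beta>)) * W' y \<partial>lborel)"
      by (intro nn_integral_mono pt)
    also have "\<dots> = (A0\<^sup>2 + Ab\<^sup>2) * ennreal (q powr (2 * \<beta>)) * B2"
      using intW' by (simp add: nn_integral_cmult)
    also have "\<dots> \<le> K"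
    proof -
      have "q powr (2 * \<beta>) \<le> 2 powr (2 * \<beta> + \<alpha>) * 2 powr (- \<alpha> * real k)" using qb unfolding q_def .
      also have "\<dots> \<le> 2 powr (2 * \<beta> + \<alpha> + \<alpha> * real r) * 2 powr (- \<alpha> * real k)"
        using apos by (intro mult_right_mono powr_mono) auto
      finally have "ennreal (q powr (2 * \<beta>)) \<le> ennreal (2 powr (2 * \<beta> + \<alpha> + \<alpha> * real r) * 2 powr (- \<alpha> * real k))"
        by (rule ennreal_leI)
      then have "(A0\<^sup>2 + Ab\<^sup>2) * ennreal (q powr (2 * \<beta>)) * B2 \<le> (A0\<^sup>2 + Ab\<^sup>2) * ennreal (2 powr (2 * \<beta> + \<alpha> + \<alpha> * real r) * 2 powr (- \<alpha> * real k)) * (B1 + B2)"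
        using SS(4) by (intro mult_mono) auto
      then show ?thesis unfolding K_def by (simp add: ennreal_mult' mult.assoc mult.commute mult.left_commute)
    qed
    finally show ?thesis .
  qed
  then show ?thesis unfolding goalform K_def .
qed

theorem mainTheorem5:
  fixes \<alpha> lam1 :: real and r :: nat
  assumes "lam1 > 2" and "0 < \<alpha>"
    and "\<alpha> \<le> real CARD('n) * (lam1 - 2) / 2" and "r \<ge> 1"
  shows "\<exists>C>0. \<forall>(\<omega>::int \<Rightarrow> real^'n) a l (k::nat) x\<^sub>1 t\<^sub>1 b L.
     valid_shift \<omega> \<and>
     good_cube \<omega> r (\<alpha> / (2 * (real CARD('n) + \<alpha>))) a l \<and> k \<ge> 1 \<and>
     x\<^sub>1 \<in> cube a l \<and> l / 2 < t\<^sub>1 \<and> t\<^sub>1 < l \<and>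
     (b, L) \<in> dyadic_grid \<omega> \<and> L = 2 ^ (k - 1) * l \<and> cube a l \<subseteq> cube b L
     \<longrightarrow>
     (\<integral>\<^sup>+ y\<^sub>1.
        (\<integral>\<^sup>+ z\<^sub>1 \<in> - cube b L.
            ennreal (t\<^sub>1 powr \<alpha> / (t\<^sub>1 + supn (x\<^sub>1 - y\<^sub>1 - z\<^sub>1)) powr (real CARD('n) + \<alpha>)) \<partial>lborel) ^ 2
        * ennreal ((t\<^sub>1 / (t\<^sub>1 + supn y\<^sub>1)) powr (real CARD('n) * lam1) / t\<^sub>1 ^ CARD('n)) \<partial>lborel)
     \<le> ennreal ((C * 2 powr (- \<alpha> * real k / 2)) ^ 2)"
proof -
  let ?n = "real CARD('n)"
  define \<beta> where "\<beta> = \<alpha> * (?n + \<alpha>) / (2 * ?n + \<alpha>)"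
  define A0 where "A0 = (\<integral>\<^sup>+(u::real^'n). ennreal (1 / (1 + supn u) powr (?n + \<alpha>)) \<partial>lborel)"
  define Ab where "Ab = (\<integral>\<^sup>+(u::real^'n). ennreal (1 / (1 + supn u) powr (?n + (\<alpha> - \<beta>))) \<partial>lborel)"
  define B1 where "B1 = (\<integral>\<^sup>+(u::real^'n). ennreal (1 / (1 + supn u) powr (?n * lam1)) \<partial>lborel)"
  define B2 where "B2 = (\<integral>\<^sup>+(u::real^'n). ennreal (1 / (1 + supn u) powr (?n * lam1 - 2 * \<beta>)) \<partial>lborel)"
  have npos: "?n \<ge> 1" by simp
  have blt: "\<beta> < \<alpha>" unfolding \<beta>_def using assms(2) npos by (simp add: field_simps)
  have bpos: "\<beta> > 0" unfolding \<beta>_def using assms(2) npos by simp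
  have fA0: "A0 < \<infinity>" unfolding A0_def by (rule G2) (use assms(2) in simp)
  have fAb: "Ab < \<infinity>" unfolding Ab_def by (rule G2) (use blt in simp)
  have fB1: "B1 < \<infinity>" unfolding B1_def by (rule G2) (use assms(1) npos in simp)
  have fB2: "B2 < \<infinity>" unfolding B2_def
  proof (rule G2)
    have "?n * lam1 - 2 * \<beta> > ?n * lam1 - 2 * \<alpha>" using blt by simp
    moreover have "2 * \<alpha> \<le> ?n * lam1 - 2 * ?n" using assms(3) by (simp add: algebra_simps)
    ultimately show "?n * lam1 - 2 * \<beta> > ?n" using npos by linarith
  qed
  define M where "M = (A0\<^sup>2 + Ab\<^sup>2) * (B1 + B2) * ennreal (2 powr (2 * \<beta> + \<alpha> + \<alpha> * real r))"
  have fM: "M < \<infinity>" unfolding M_def using fA0 fAb fB1 fB2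
    by (simp add: ennreal_mult_less_top power_less_top_ennreal)
  define C where "C = sqrt (enn2real M) + 1"
  show ?thesis
  proof (intro exI[of _ C] conjI allI impI)
    show "C > 0" unfolding C_def by (simp add: add_nonneg_pos)
    fix \<omega> :: "int \<Rightarrow> real^'n" and a l and k :: nat and x\<^sub>1 t\<^sub>1 b L
    assume H: "valid_shift \<omega> \<and>
     good_cube \<omega> r (\<alpha> / (2 * (real CARD('n) + \<alpha>))) a l \<and> k \<ge> 1 \<and>
     x\<^sub>1 \<in> cube a l \<and> l / 2 < t\<^sub>1 \<and> t\<^sub>1 < l \<and>
     (b, L) \<in> dyadic_grid \<omega> \<and> L = 2 ^ (k - 1) * l \<and> cube a l \<subseteq> cube b L"
    have "(\<integral>\<^sup>+ y\<^sub>1.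
        (\<integral>\<^sup>+ z\<^sub>1 \<in> - cube b L.
            ennreal (t\<^sub>1 powr \<alpha> / (t\<^sub>1 + supn (x\<^sub>1 - y\<^sub>1 - z\<^sub>1)) powr (real CARD('n) + \<alpha>)) \<partial>lborel) ^ 2
        * ennreal ((t\<^sub>1 / (t\<^sub>1 + supn y\<^sub>1)) powr (real CARD('n) * lam1) / t\<^sub>1 ^ CARD('n)) \<partial>lborel)
       \<le> M * ennreal (2 powr (- \<alpha> * real k))"
      unfolding M_def A0_def Ab_def B1_def B2_def \<beta>_def
      by (rule core[OF assms(1) assms(2) assms(3)]) (use H in auto)
    also have "\<dots> \<le> ennreal ((C * 2 powr (- \<alpha> * real k / 2)) ^ 2)"
    proof -
      have Meq: "M = ennreal (enn2real M)" using fM by simp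
      have p2: "(2 powr (- \<alpha> * real k / 2)) ^ 2 = (2::real) powr (- \<alpha> * real k)"
        by (simp add: power2_eq_square powr_add[symmetric])
      have "enn2real M \<le> C ^ 2"
      proof -
        have "enn2real M = (sqrt (enn2real M)) ^ 2" by simp
        also have "\<dots> \<le> C ^ 2" unfolding C_def by (intro power_mono) auto
        finally show ?thesis .
      qed
      then have "enn2real M * 2 powr (- \<alpha> * real k) \<le> (C * 2 powr (- \<alpha> * real k / 2)) ^ 2"
        unfolding power_mult_distrib p2 by (intro mult_right_mono) auto
      then have "ennreal (enn2real M * 2 powr (- \<alpha> * real k)) \<le> ennreal ((C * 2 powr (- \<alpha> * real k / 2)) ^ 2)"
        by (rule ennreal_leI)
      then show ?thesis by (subst Meq) (simp add: ennreal_mult')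
    qed
    finally show "(\<integral>\<^sup>+ y\<^sub>1.
        (\<integral>\<^sup>+ z\<^sub>1 \<in> - cube b L.
            ennreal (t\<^sub>1 powr \<alpha> / (t\<^sub>1 + supn (x\<^sub>1 - y\<^sub>1 - z\<^sub>1)) powr (real CARD('n) + \<alpha>)) \<partial>lborel) ^ 2
        * ennreal ((t\<^sub>1 / (t\<^sub>1 + supn y\<^sub>1)) powr (real CARD('n) * lam1) / t\<^sub>1 ^ CARD('n)) \<partial>lborel)
     \<le> ennreal ((C * 2 powr (- \<alpha> * real k / 2)) ^ 2)" .
  qed
qed

end
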